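(* Let $\{\alpha_k^i\}$ and $\{\tilde\alpha_k^i\}$, $i=1,\dots,n$, be the sequences produced by Algorithm DFL (defined in the context) with fixed $\epsilon>0$. Then $\lim_{k\to\infty}\alpha_k^i=0$ and $\lim_{k\to\infty}\tilde\alpha_k^i=0$ for every $i=1,\dots,n$.
   Context: Problem data: $f:\mathbb{R}^n\to\mathbb{R}$, $g:\mathbb{R}^n\to\mathbb{R}^m$, $h:\mathbb{R}^n\to\mathbb{R}^q$ continuously differentiable; $l,u\in\mathbb{R}^n$ with $l<u$; $X=\{x: l\le x\le u\}$; $S_<=\{x: g(x)<0\}$; there is $x_0\in X\cap S_<$. Fix $\nu>1$. For $\epsilon>0$, $P(x;\epsilon)=f(x)-\epsilon\sum_{j=1}^m\log(-g_j(x))+\frac1\epsilon\sum_{j=1}^q|h_j(x)|^\nu$ if $x\in S_<$, and $P(x;\epsilon)=+\infty$ otherwise. $e^i$ is the $i$-th unit coordinate vector. Expansion Step$(\hat\alpha,y,p,\gamma)$ with parameter $\delta\in(0,1)$ (using the current $\epsilon$): let $b$ be the largest $\beta\ge0$ with $y+\beta p\in X$; set $\alpha\leftarrow\hat\alpha$; repeat: $\check\alpha\leftarrow\min\{b,\alpha/\delta\}$; if $y+\check\alpha p\notin S_<$ return $\alpha$; else if $P(y+\check\alpha p;\epsilon)\le P(y;\epsilon)-\gamma\check\alpha^2$ set $\alpha\leftarrow\check\alpha$ and return if $\check\alpha=b$, else repeat; otherwise return $\alpha$. Algorithm DFL (parameters $\epsilon>0,\gamma>0,\theta\in(0,1),\delta\in(0,1)$,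 $\tilde\alpha_0^i>0$, $d_0^i=e^i$): for $k=0,1,\dots$: set $y_k^1=x_k$. For $i=1,\dots,n$: (a) choose $\hat\alpha\in[0,\tilde\alpha_k^i]$ with $y_k^i+\hat\alpha d_k^i\in S_<\cap X$; if $\hat\alpha>0$ and $P(y_k^i+\hat\alpha d_k^i;\epsilon)\le P(y_k^i;\epsilon)-\gamma\hat\alpha^2$, let $\alpha_k^i$ be the output of the Expansion Step$(\hat\alpha,y_k^i,d_k^i,\gamma)$ and set $\tilde\alpha_{k+1}^i=\alpha_k^i$, $d_{k+1}^i=d_k^i$; (b) otherwise do the same with $-d_k^i$ in place of $d_k^i$, and on success set $\tilde\alpha_{k+1}^i=\alpha_k^i$, $d_{k+1}^i=-d_k^i$; (c) if neither succeeds set $\alpha_k^i=0$, $d_{k+1}^i=d_k^i$, $\tilde\alpha_{k+1}^i=\theta\tilde\alpha_k^i$. Then $y_k^{i+1}=y_k^i+\alpha_k^i d_{k+1}^i$. Finally choose any $x_{k+1}\in S_<\cap X$ with $P(x_{k+1};\epsilon)\le P(y_k^{n+1};\epsilon)$. *)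

theory Defs
  imports "HOL-Analysis.Analysis"
begin

definition C1_fun :: "(real^'n \<Rightarrow> real) \<Rightarrow> bool" where
  "C1_fun F \<longleftrightarrow> (\<exists>F'. (\<forall>x. (F has_derivative blinfun_apply (F' x)) (at x))
                     \<and> continuous_on UNIV F')"

definition Sless :: "(nat \<Rightarrow> real^'n \<Rightarrow> real) \<Rightarrow> nat \<Rightarrow> (real^'n) set" where
  "Sless g m = {x. \<forall>j<m. g j x < 0}"

definition pen :: "(real^'n \<Rightarrow> real) \<Rightarrow> (nat \<Rightarrow> real^'n \<Rightarrow> real) \<Rightarrow> nat
    \<Rightarrow> (nat \<Rightarrow> real^'n \<Rightarrow> real) \<Rightarrow> nat \<Rightarrow> real \<Rightarrow> real \<Rightarrow> real^'n \<Rightarrow> ereal" where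
  "pen f g m h q nu eps x =
     (if x \<in> Sless g m
      then ereal (f x - eps * (\<Sum>j<m. ln (- g j x)) + (1 / eps) * (\<Sum>j<q. \<bar>h j x\<bar> powr nu))
      else \<infinity>)"

definition bmax :: "(real^'n) set \<Rightarrow> real^'n \<Rightarrow> real^'n \<Rightarrow> real" where
  "bmax X y p = Sup {\<beta>. 0 \<le> \<beta> \<and> y + \<beta> *\<^sub>R p \<in> X}"

text \<open>Expansion Step: expand Pf S X gam del y p a r means that the loop of the
  Expansion Step, when its current value of alpha is a, terminates returning r.
  Starting it with a = alpha-hat gives the output of Expansion Step(alpha-hat,y,p,gamma).\<close>
inductive expand :: "(real^'n \<Rightarrow> ereal) \<Rightarrow> (real^'n) set \<Rightarrow> (real^'n) set \<Rightarrow> real \<Rightarrow> real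
    \<Rightarrow> real^'n \<Rightarrow> real^'n \<Rightarrow> real \<Rightarrow> real \<Rightarrow> bool"
  for Pf S X gam del y p where
  infeas: "y + min (bmax X y p) (a / del) *\<^sub>R p \<notin> S \<Longrightarrow> expand Pf S X gam del y p a a"
| at_bound: "\<lbrakk> ac = min (bmax X y p) (a / del); y + ac *\<^sub>R p \<in> S;
      Pf (y + ac *\<^sub>R p) \<le> Pf y - ereal (gam * ac\<^sup>2); ac = bmax X y p \<rbrakk>
    \<Longrightarrow> expand Pf S X gam del y p a ac"
| continue: "\<lbrakk> ac = min (bmax X y p) (a / del); y + ac *\<^sub>R p \<in> S;
      Pf (y + ac *\<^sub>R p) \<le> Pf y - ereal (gam * ac\<^sup>2); ac \<noteq> bmax X y p;
      expand Pf S X gam del y p ac r \<rbrakk>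
    \<Longrightarrow> expand Pf S X gam del y p a r"
| nodecr: "\<lbrakk> ac = min (bmax X y p) (a / del); y + ac *\<^sub>R p \<in> S;
      \<not> Pf (y + ac *\<^sub>R p) \<le> Pf y - ereal (gam * ac\<^sup>2) \<rbrakk>
    \<Longrightarrow> expand Pf S X gam del y p a a"

definition trial_ok :: "(real^'n) set \<Rightarrow> (real^'n) set \<Rightarrow> real^'n \<Rightarrow> real^'n \<Rightarrow> real \<Rightarrow> real \<Rightarrow> bool" where
  "trial_ok S X y p t a \<longleftrightarrow> 0 \<le> a \<and> a \<le> t \<and> y + a *\<^sub>R p \<in> S \<inter> X"

definition suff_decr :: "(real^'n \<Rightarrow> ereal) \<Rightarrow> real \<Rightarrow> real^'n \<Rightarrow> real^'n \<Rightarrow> real \<Rightarrow> bool" where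
  "suff_decr Pf gam y p a \<longleftrightarrow> a > 0 \<and> Pf (y + a *\<^sub>R p) \<le> Pf y - ereal (gam * a\<^sup>2)"

text \<open>One inner iteration (steps (a),(b),(c)) for coordinate i at outer iteration k:
  current point yi, direction di, tentative step ti; produces alpha_k^i (al'),
  alpha-tilde_{k+1}^i (alt') and d_{k+1}^i (d').  The trial step alpha-hat is chosen
  freely (existentially) among admissible ones, separately in (a) and (b).\<close>
definition dfl_inner :: "(real^'n \<Rightarrow> ereal) \<Rightarrow> (real^'n) set \<Rightarrow> (real^'n) set \<Rightarrow> real \<Rightarrow> real \<Rightarrow> real
    \<Rightarrow> real^'n \<Rightarrow> real^'n \<Rightarrow> real \<Rightarrow> real \<Rightarrow> real \<Rightarrow> real^'n \<Rightarrow> bool" where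
  "dfl_inner Pf S X gam theta del yi di ti al' alt' d' \<longleftrightarrow>
     (\<exists>a. trial_ok S X yi di ti a \<and> suff_decr Pf gam yi di a
          \<and> expand Pf S X gam del yi di a al' \<and> alt' = al' \<and> d' = di)
   \<or> ((\<exists>a. trial_ok S X yi di ti a \<and> \<not> suff_decr Pf gam yi di a) \<and>
       ((\<exists>a. trial_ok S X yi (- di) ti a \<and> suff_decr Pf gam yi (- di) a
             \<and> expand Pf S X gam del yi (- di) a al' \<and> alt' = al' \<and> d' = - di)
        \<or> ((\<exists>a. trial_ok S X yi (- di) ti a \<and> \<not> suff_decr Pf gam yi (- di) a)
             \<and> al' = 0 \<and> d' = di \<and> alt' = theta * ti)))"

text \<open>Coordinates are visited in the order given by the
  enumeration e of the index type ('paper index i' = e (i-1)); inner indices are 0..n-1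
  and y k n is y_k^{n+1} of the paper.\<close>
definition dfl_run :: "(real^'n \<Rightarrow> real) \<Rightarrow> (nat \<Rightarrow> real^'n \<Rightarrow> real) \<Rightarrow> nat
    \<Rightarrow> (nat \<Rightarrow> real^'n \<Rightarrow> real) \<Rightarrow> nat \<Rightarrow> real^'n \<Rightarrow> real^'n \<Rightarrow> real
    \<Rightarrow> real \<Rightarrow> real \<Rightarrow> real \<Rightarrow> real \<Rightarrow> (nat \<Rightarrow> 'n)
    \<Rightarrow> (nat \<Rightarrow> real^'n) \<Rightarrow> (nat \<Rightarrow> nat \<Rightarrow> real^'n) \<Rightarrow> (nat \<Rightarrow> nat \<Rightarrow> real)
    \<Rightarrow> (nat \<Rightarrow> nat \<Rightarrow> real) \<Rightarrow> (nat \<Rightarrow> nat \<Rightarrow> real^'n) \<Rightarrow> bool" where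
  "dfl_run f g m h q l u nu eps gam theta del e x y al alt d \<longleftrightarrow>
     (let S = Sless g m; X = cbox l u; Pf = pen f g m h q nu eps; n = CARD('n) in
       x 0 \<in> S \<inter> X
     \<and> (\<forall>i<n. alt 0 i > 0 \<and> d 0 i = axis (e i) 1)
     \<and> (\<forall>k. y k 0 = x k)
     \<and> (\<forall>k. \<forall>i<n. dfl_inner Pf S X gam theta del (y k i) (d k i) (alt k i)
                      (al k i) (alt (Suc k) i) (d (Suc k) i)
                 \<and> y k (Suc i) = y k i + al k i *\<^sub>R d (Suc k) i)
     \<and> (\<forall>k. x (Suc k) \<in> S \<inter> X \<and> Pf (x (Suc k)) \<le> Pf (y k n)))"

end

theory Submission
  imports Defs
begin

lemma bmax_mem:
  fixes l u y p :: "real^'n"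
  assumes y: "y \<in> cbox l u" and p: "p \<noteq> 0"
  shows "0 \<le> bmax (cbox l u) y p \<and> y + bmax (cbox l u) y p *\<^sub>R p \<in> cbox l u"
proof -
  let ?T = "{\<beta>. 0 \<le> \<beta> \<and> y + \<beta> *\<^sub>R p \<in> cbox l u}"
  obtain i where i: "p $ i \<noteq> 0" using p by (metis vec_eq_iff zero_index)
  have cl: "closed ?T"
  proof -
    have "?T = {\<beta>. 0 \<le> \<beta>} \<inter> (\<lambda>\<beta>. y + \<beta> *\<^sub>R p) -` cbox l u" by auto
    moreover have "closed ((\<lambda>\<beta>::real. y + \<beta> *\<^sub>R p) -` cbox l u)"
      by (intro continuous_closed_vimage) (auto intro!: continuous_intros)
    ultimately show ?thesis by (simp add: closed_Int closed_Collect_le)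
  qed
  have ne: "0 \<in> ?T" using y by simp
  have bd: "bdd_above ?T"
  proof (rule bdd_aboveI)
    fix b assume "b \<in> ?T"
    hence b: "0 \<le> b" "l$i \<le> y$i + b * p$i" "y$i + b * p$i \<le> u$i" by (auto simp: mem_box_cart)
    have yi: "l$i \<le> y$i" "y$i \<le> u$i" using y by (auto simp: mem_box_cart)
    have "b * \<bar>p$i\<bar> \<le> u$i - l$i" using b yi by (cases "p$i \<ge> 0") (auto simp: abs_if)
    hence "b \<le> (u$i - l$i) / \<bar>p$i\<bar>" using i by (simp add: field_simps)
    thus "b \<le> (u$i - l$i) / \<bar>p$i\<bar>" .
  qed
  have "Sup ?T \<in> ?T" using closed_contains_Sup[OF _ bd cl] ne by blast
  thus ?thesis unfolding bmax_def by simp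
qed

lemma bmax_seg:
  fixes l u y p :: "real^'n"
  assumes y: "y \<in> cbox l u" and c: "0 \<le> c" "c \<le> bmax (cbox l u) y p"
  shows "y + c *\<^sub>R p \<in> cbox l u"
proof (cases "p = 0")
  case True thus ?thesis using y by simp
next
  case False
  let ?b = "bmax (cbox l u) y p"
  have b: "y + ?b *\<^sub>R p \<in> cbox l u" using bmax_mem[OF y False] by blast
  show ?thesis unfolding mem_box_cart
  proof
    fix i
    have yi: "l$i \<le> y$i" "y$i \<le> u$i" using y by (auto simp: mem_box_cart)
    have bi: "l$i \<le> y$i + ?b * p$i" "y$i + ?b * p$i \<le> u$i" using b by (auto simp: mem_box_cart)
    have "c * p$i \<le> ?b * p$i \<and> 0 \<le> c * p$i \<or> ?b * p$i \<le> c * p$i \<and> c * p$i \<le> 0"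
      using c by (cases "p$i \<ge> 0") (auto intro: mult_right_mono mult_right_mono_neg mult_nonneg_nonpos)
    thus "l$i \<le> (y + c *\<^sub>R p)$i \<and> (y + c *\<^sub>R p)$i \<le> u$i" using yi bi by auto
  qed
qed

lemma expand_inv:
  fixes l u y p :: "real^'n"
  assumes "expand Pf S (cbox l u) gam del y p a r" "y \<in> cbox l u" "del > 0"
    "y + a *\<^sub>R p \<in> S \<inter> cbox l u" "Pf (y + a *\<^sub>R p) \<le> Pf y - ereal (gam * a\<^sup>2)" "p = 0 \<or> 0 \<le> a"
  shows "y + r *\<^sub>R p \<in> S \<inter> cbox l u \<and> Pf (y + r *\<^sub>R p) \<le> Pf y - ereal (gam * r\<^sup>2)"
  using assms
proof (induction rule: expand.induct)
  case (infeas a) thus ?case by simp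
next
  case (at_bound ac a)
  have "y + ac *\<^sub>R p \<in> cbox l u"
  proof (cases "p = 0")
    case True thus ?thesis using at_bound by simp
  next
    case False
    have "0 \<le> bmax (cbox l u) y p" using bmax_mem[OF at_bound(5) False] by blast
    moreover have "0 \<le> a" using at_bound.prems(5) False by simp
    ultimately have "0 \<le> ac" "ac \<le> bmax (cbox l u) y p" using at_bound(1,6) by auto
    thus ?thesis using bmax_seg at_bound(5) by blast
  qed
  thus ?case using at_bound.hyps(2,3) by simp
next
  case (continue ac a r)
  have "y + ac *\<^sub>R p \<in> cbox l u \<and> (p = 0 \<or> 0 \<le> ac)"
  proof (cases "p = 0")
    case True thus ?thesis using continue by simp
  next
    case False
    have "0 \<le> bmax (cbox l u) y p" using bmax_mem[OF continue(7) False] by blast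
    moreover have "0 \<le> a" using continue.prems(5) False by simp
    ultimately have "0 \<le> ac" "ac \<le> bmax (cbox l u) y p" using continue(1,8) by auto
    thus ?thesis using bmax_seg continue(7) by blast
  qed
  hence h1: "y + ac *\<^sub>R p \<in> S \<inter> cbox l u" and h2: "p = 0 \<or> 0 \<le> ac"
    using continue.hyps(2) by auto
  show ?case by (rule continue.IH[OF continue.prems(1,2) h1 continue.hyps(3) h2])
next
  case (nodecr ac a) thus ?case by simp
qed

lemma inner_step:
  fixes l u yi di :: "real^'n"
  assumes "dfl_inner Pf S (cbox l u) gam theta del yi di ti al' alt' d'" "yi \<in> cbox l u" "del > 0"
  shows "(al' = 0 \<and> d' = di \<and> alt' = theta * ti) \<or>
    (yi + al' *\<^sub>R d' \<in> S \<inter> cbox l u \<and> Pf (yi + al' *\<^sub>R d') \<le> Pf yi - ereal (gam * al'\<^sup>2) \<and> alt' = al')"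
  using assms(1) unfolding dfl_inner_def
proof (elim disjE conjE exE)
  fix a assume "trial_ok S (cbox l u) yi di ti a" "suff_decr Pf gam yi di a"
    "expand Pf S (cbox l u) gam del yi di a al'" "alt' = al'" "d' = di"
  hence "yi + al' *\<^sub>R di \<in> S \<inter> cbox l u \<and> Pf (yi + al' *\<^sub>R di) \<le> Pf yi - ereal (gam * al'\<^sup>2)"
    using expand_inv[of Pf S l u gam del yi di a al'] assms(2,3)
    unfolding trial_ok_def suff_decr_def by blast
  thus ?thesis using \<open>alt' = al'\<close> \<open>d' = di\<close> by blast
next
  fix a b assume "trial_ok S (cbox l u) yi (-di) ti b" "suff_decr Pf gam yi (-di) b"
    "expand Pf S (cbox l u) gam del yi (-di) b al'" "alt' = al'" "d' = - di"
  hence "yi + al' *\<^sub>R (-di) \<in> S \<inter> cbox l u \<and> Pf (yi + al' *\<^sub>R (-di)) \<le> Pf yi - ereal (gam * al'\<^sup>2)"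
    using expand_inv[of Pf S l u gam del yi "-di" b al'] assms(2,3)
    unfolding trial_ok_def suff_decr_def by blast
  thus ?thesis using \<open>alt' = al'\<close> \<open>d' = -di\<close> by blast
qed blast+

lemma contract_zero:
  fixes a b :: "nat \<Rightarrow> real"
  assumes b: "b \<longlonglongrightarrow> 0" and th: "0 \<le> theta" "theta < 1"
    and rec: "\<And>k. \<bar>a (Suc k)\<bar> \<le> \<bar>b k\<bar> + theta * \<bar>a k\<bar>"
  shows "a \<longlonglongrightarrow> 0"
proof (rule LIMSEQ_I)
  fix r :: real assume r: "0 < r"
  define c where "c = r / 2"
  have c: "0 < c" using r by (simp add: c_def)
  have "0 < (1 - theta) * c" using th c by simp
  then obtain N where N: "\<And>k. k \<ge> N \<Longrightarrow> norm (b k - 0) < (1 - theta) * c"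
    using LIMSEQ_D[OF b] by blast
  have ind: "\<bar>a (N + j)\<bar> - c \<le> theta ^ j * \<bar>a N\<bar>" for j
  proof (induction j)
    case 0 thus ?case using c by simp
  next
    case (Suc j)
    have "\<bar>a (N + Suc j)\<bar> \<le> \<bar>b (N + j)\<bar> + theta * \<bar>a (N + j)\<bar>" using rec[of "N + j"] by simp
    also have "\<dots> \<le> (1 - theta) * c + theta * \<bar>a (N + j)\<bar>" using N[of "N + j"] by simp
    finally have "\<bar>a (N + Suc j)\<bar> - c \<le> theta * (\<bar>a (N + j)\<bar> - c)" by (simp add: algebra_simps)
    also have "\<dots> \<le> theta * (theta ^ j * \<bar>a N\<bar>)" using Suc th by (intro mult_left_mono) auto
    finally show ?case by simp
  qed
  have "(\<lambda>j. theta ^ j) \<longlonglongrightarrow> 0" by (rule LIMSEQ_power_zero) (use th in simp)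
  hence "(\<lambda>j. theta ^ j * \<bar>a N\<bar>) \<longlonglongrightarrow> 0" by (rule tendsto_mult_left_zero)
  from LIMSEQ_D[OF this c] obtain M where M: "\<And>j. j \<ge> M \<Longrightarrow> norm (theta ^ j * \<bar>a N\<bar> - 0) < c"
    by blast
  show "\<exists>no. \<forall>n\<ge>no. norm (a n - 0) < r"
  proof (intro exI allI impI)
    fix k assume "k \<ge> N + M"
    define j where "j = k - N"
    have j: "k = N + j" "j \<ge> M" using \<open>k \<ge> N + M\<close> by (auto simp: j_def)
    have "\<bar>a k\<bar> - c < c" using ind[of j] M[of j] j th by auto
    thus "norm (a k - 0) < r" by (simp add: c_def)
  qed
qed

lemma C1_cont: "C1_fun F \<Longrightarrow> continuous_on A F"
  unfolding C1_fun_def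
  by (meson continuous_at_imp_continuous_on has_derivative_continuous)

lemma bound_box:
  fixes F :: "real^'n \<Rightarrow> real"
  assumes "continuous_on (cbox l u) F"
  shows "\<exists>M. \<forall>x\<in>cbox l u. \<bar>F x\<bar> \<le> M"
proof -
  have "bounded (F ` cbox l u)"
    using compact_continuous_image[OF assms compact_cbox] compact_imp_bounded by blast
  thus ?thesis unfolding bounded_iff by auto
qed

theorem proposition3p2:
  fixes f :: "real^'n \<Rightarrow> real"
    and g h :: "nat \<Rightarrow> real^'n \<Rightarrow> real"
    and m q :: nat
    and l u :: "real^'n"
    and nu eps gam theta del :: real
    and e :: "nat \<Rightarrow> 'n"
    and x :: "nat \<Rightarrow> real^'n"
    and y d :: "nat \<Rightarrow> nat \<Rightarrow> real^'n"
    and al alt :: "nat \<Rightarrow> nat \<Rightarrow> real"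
  assumes "C1_fun f" "\<forall>j<m. C1_fun (g j)" "\<forall>j<q. C1_fun (h j)"
    and "\<forall>i. l $ i < u $ i"
    and "\<exists>x0. x0 \<in> cbox l u \<inter> Sless g m"
    and "nu > 1" "eps > 0" "gam > 0" "0 < theta" "theta < 1" "0 < del" "del < 1"
    and "bij_betw e {..<CARD('n)} UNIV"
    and "dfl_run f g m h q l u nu eps gam theta del e x y al alt d"
  shows "\<forall>i<CARD('n). (\<lambda>k. al k i) \<longlonglongrightarrow> 0 \<and> (\<lambda>k. alt k i) \<longlonglongrightarrow> 0"
proof -
  define S where "S = Sless g m"
  define X where "X = cbox l u"
  define Pf where "Pf = pen f g m h q nu eps"
  define n where "n = CARD('n)"
  have R: "x 0 \<in> S \<inter> X"
     "\<forall>k. y k 0 = x k"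
     "\<forall>k. \<forall>i<n. dfl_inner Pf S X gam theta del (y k i) (d k i) (alt k i)
                      (al k i) (alt (Suc k) i) (d (Suc k) i)
                 \<and> y k (Suc i) = y k i + al k i *\<^sub>R d (Suc k) i"
     "\<forall>k. x (Suc k) \<in> S \<inter> X \<and> Pf (x (Suc k)) \<le> Pf (y k n)"
    using assms(14) unfolding dfl_run_def Let_def S_def X_def Pf_def n_def by auto
  have xSX: "x k \<in> S \<inter> X" for k using R(1,4) by (cases k) auto
  define P0 where "P0 z = f z - eps * (\<Sum>j<m. ln (- g j z)) + (1 / eps) * (\<Sum>j<q. \<bar>h j z\<bar> powr nu)" for z
  have PfS: "Pf z = ereal (P0 z)" if "z \<in> S" for z
    using that unfolding Pf_def pen_def P0_def S_def by simp
  obtain Mf where Mf: "\<forall>z\<in>X. \<bar>f z\<bar> \<le> Mf"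
    using bound_box[OF C1_cont[OF assms(1)]] X_def by blast
  have "\<forall>j<m. \<exists>M. \<forall>z\<in>X. \<bar>g j z\<bar> \<le> M"
    using bound_box[OF C1_cont] assms(2) X_def by blast
  then obtain Mg where Mg: "\<forall>j<m. \<forall>z\<in>X. \<bar>g j z\<bar> \<le> Mg j" by metis
  define B where "B = - Mf - eps * (\<Sum>j<m. Mg j)"
  have lower: "B \<le> P0 z" if z: "z \<in> S \<inter> X" for z
  proof -
    have "(\<Sum>j<m. ln (- g j z)) \<le> (\<Sum>j<m. Mg j)"
    proof (rule sum_mono)
      fix j assume "j \<in> {..<m}"
      hence gj: "g j z < 0" "\<bar>g j z\<bar> \<le> Mg j" using z Mg unfolding S_def Sless_def by auto
      have "ln (- g j z) \<le> - g j z - 1" using gj by (intro ln_le_minus_one) simp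
      thus "ln (- g j z) \<le> Mg j" using gj by simp
    qed
    hence a: "- eps * (\<Sum>j<m. Mg j) \<le> - eps * (\<Sum>j<m. ln (- g j z))"
      using assms(7) by simp
    have b: "0 \<le> (1 / eps) * (\<Sum>j<q. \<bar>h j z\<bar> powr nu)"
      using assms(7) by (intro mult_nonneg_nonneg sum_nonneg) auto
    have c: "- Mf \<le> f z" using Mf z by fastforce
    show ?thesis unfolding B_def P0_def using a b c by linarith
  qed
  have inner: "i \<le> n \<Longrightarrow> y k i \<in> S \<inter> X \<and> P0 (y k i) \<le> P0 (x k) - gam * (\<Sum>j<i. (al k j)\<^sup>2)" for k i
  proof (induction i)
    case 0 thus ?case using xSX R(2) by simp
  next
    case (Suc i)
    hence IH: "y k i \<in> S \<inter> X" "P0 (y k i) \<le> P0 (x k) - gam * (\<Sum>j<i. (al k j)\<^sup>2)" "i < n" by auto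
    have di: "dfl_inner Pf S (cbox l u) gam theta del (y k i) (d k i) (alt k i)
                      (al k i) (alt (Suc k) i) (d (Suc k) i)" and ys: "y k (Suc i) = y k i + al k i *\<^sub>R d (Suc k) i"
      using R(3) IH(3) X_def by auto
    from inner_step[OF di _ assms(11)] IH(1) X_def
    have "al k i = 0 \<or> (y k (Suc i) \<in> S \<inter> X \<and> Pf (y k (Suc i)) \<le> Pf (y k i) - ereal (gam * (al k i)\<^sup>2))"
      using ys by auto
    thus ?case
    proof
      assume "al k i = 0" thus ?thesis using IH ys by simp
    next
      assume A: "y k (Suc i) \<in> S \<inter> X \<and> Pf (y k (Suc i)) \<le> Pf (y k i) - ereal (gam * (al k i)\<^sup>2)"
      hence "P0 (y k (Suc i)) \<le> P0 (y k i) - gam * (al k i)\<^sup>2"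
        using PfS IH(1) by auto
      thus ?thesis using A IH(2) by (simp add: algebra_simps)
    qed
  qed
  have outer: "P0 (x (Suc k)) \<le> P0 (x k) - gam * (\<Sum>j<n. (al k j)\<^sup>2)" for k
  proof -
    have "y k n \<in> S \<inter> X" "P0 (y k n) \<le> P0 (x k) - gam * (\<Sum>j<n. (al k j)\<^sup>2)" using inner by auto
    moreover have "Pf (x (Suc k)) \<le> Pf (y k n)" using R(4) by auto
    ultimately have "P0 (x (Suc k)) \<le> P0 (y k n)" using PfS xSX[of "Suc k"] by auto
    thus ?thesis using \<open>P0 (y k n) \<le> _\<close> by linarith
  qed
  have tele: "gam * (\<Sum>k<K. \<Sum>j<n. (al k j)\<^sup>2) \<le> P0 (x 0) - P0 (x K)" for K
  proof (induction K)
    case 0 thus ?case by simp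
  next
    case (Suc K) thus ?case using outer[of K] by (simp add: algebra_simps)
  qed
  have al0: "(\<lambda>k. al k i) \<longlonglongrightarrow> 0" if i: "i < n" for i
  proof -
    have "summable (\<lambda>k. (al k i)\<^sup>2)"
    proof (rule summableI_nonneg_bounded)
      fix K
      have "(\<Sum>k<K. (al k i)\<^sup>2) \<le> (\<Sum>k<K. \<Sum>j<n. (al k j)\<^sup>2)"
        using i by (intro sum_mono member_le_sum) auto
      also have "\<dots> \<le> (P0 (x 0) - B) / gam"
        using tele[of K] lower[OF xSX[of K]] assms(8) by (simp add: field_simps)
      finally show "(\<Sum>k<K. (al k i)\<^sup>2) \<le> (P0 (x 0) - B) / gam" .
    qed simp
    hence "(\<lambda>k. (al k i)\<^sup>2) \<longlonglongrightarrow> 0" by (rule summable_LIMSEQ_zero)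
    hence "(\<lambda>k. sqrt ((al k i)\<^sup>2)) \<longlonglongrightarrow> sqrt 0" by (rule tendsto_real_sqrt)
    hence "(\<lambda>k. \<bar>al k i\<bar>) \<longlonglongrightarrow> 0" by simp
    thus ?thesis by (simp add: tendsto_rabs_zero_iff)
  qed
  have alt0: "(\<lambda>k. alt k i) \<longlonglongrightarrow> 0" if i: "i < n" for i
  proof (rule contract_zero[OF al0[OF i]])
    show "0 \<le> theta" "theta < 1" using assms by auto
    fix k
    have di: "dfl_inner Pf S (cbox l u) gam theta del (y k i) (d k i) (alt k i)
                      (al k i) (alt (Suc k) i) (d (Suc k) i)"
      using R(3) i X_def by auto
    have "y k i \<in> cbox l u" using inner[of i k] i X_def by auto
    from inner_step[OF di this assms(11)]
    have "(al k i = 0 \<and> alt (Suc k) i = theta * alt k i) \<or> alt (Suc k) i = al k i" by blast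
    thus "\<bar>alt (Suc k) i\<bar> \<le> \<bar>al k i\<bar> + theta * \<bar>alt k i\<bar>"
      using assms(9) by (auto simp: abs_mult)
  qed
  show ?thesis using al0 alt0 n_def by blast
qed

end
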